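(* Let $F:\mathcal{H}\to\mathbb{R}$ be differentiable with $L$-Lipschitz gradient, $\arg\min F\ne\emptyset$, satisfying (PL) with $\mu>0$, and assume $\mu\le L$. Let $\delta>0$ and $$\alpha_\pm=\frac12\Big(\delta+\frac{3L}{\delta}\pm\sqrt{\Big(\delta+\frac L\delta\Big)^2-4\mu}\Big).$$ Let $\alpha\in\big(\frac L\delta,\alpha_-\big]\cup\big[\alpha_+,\delta+\frac{2L}\delta\big)$ with $\alpha\ne\frac13\big(\delta+\frac{4L}{\delta}\big)$, and let $x(\cdot)$ be the solution of the heavy ball system with damping $\alpha$ and initial point $x_0$. Then for all $t\ge0$, $$F(x(t))-F_*\le (F(x_0)-F_* )\Big(1+\frac{\delta+\frac{2L}{\delta}-\alpha}{\big|\delta+\frac{4L}\delta-3\alpha\big|}\Big)e^{-mt},\qquad m=\min\Big\{\delta+\frac{2L}\delta-\alpha,\ 2\Big(\alpha-\frac L\delta\Big)\Big\}.$$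
   Context: (PL) with constant $\mu>0$: $F(x)-F_*\le \frac{1}{2\mu}\|\nabla F(x)\|^2$ for all $x$, where $F_*=\min F$. Heavy ball system: $\ddot x(t)+\alpha\dot x(t)+\nabla F(x(t))=0$, $x(0)=x_0$, $\dot x(0)=0$ (unique $C^2$ global solution). *)

theory Defs
  imports "HOL-Analysis.Analysis"
begin

definition Fstar :: "('a \<Rightarrow> real) \<Rightarrow> real" where
  "Fstar F = (INF y. F y)"

definition heavy_ball_solution ::
  "('a::real_normed_vector \<Rightarrow> 'a) \<Rightarrow> real \<Rightarrow> 'a \<Rightarrow> (real \<Rightarrow> 'a) \<Rightarrow> bool" where
  "heavy_ball_solution gradF alpha x0 x \<longleftrightarrow>
     (\<exists>v a. x 0 = x0 \<and> v 0 = 0 \<and>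
        (\<forall>t\<ge>0. (x has_vector_derivative v t) (at t within {0..})) \<and>
        (\<forall>t\<ge>0. (v has_vector_derivative a t) (at t within {0..})) \<and>
        continuous_on {0..} a \<and>
        (\<forall>t\<ge>0. a t + alpha *\<^sub>R v t + gradF (x t) = 0))"

end

theory Submission
  imports Defs
begin
lemma quot_lim:
  fixes f :: "real \<Rightarrow> 'b::real_normed_vector"
  assumes d: "(f has_vector_derivative f') (at t within {0..})" and t: "t \<ge> 0"
  shows "((\<lambda>h. (1/h) *\<^sub>R (f (t+h) - f t)) \<longlongrightarrow> f') (at_right 0)"
proof -
  have d2: "(f has_vector_derivative f') (at t within {t<..})"
    by (rule has_vector_derivative_within_subset[OF d]) (use t in auto)
  hence "((\<lambda>y. (1 / norm(y - t)) *\<^sub>R (f y - (f t + (y - t) *\<^sub>R f'))) \<longlongrightarrow> 0) (at_right t)"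
    unfolding has_vector_derivative_def has_derivative_within by auto
  hence "((\<lambda>y. (1 / norm(y - t)) *\<^sub>R (f y - (f t + (y - t) *\<^sub>R f')) + f') \<longlongrightarrow> 0 + f') (at_right t)"
    by (intro tendsto_intros)
  moreover have "eventually (\<lambda>y. (1 / norm(y - t)) *\<^sub>R (f y - (f t + (y - t) *\<^sub>R f')) + f' = (1/(y-t)) *\<^sub>R (f y - f t)) (at_right t)"
    unfolding eventually_at_right_field
  proof (intro exI[of _ "t+1"] conjI allI impI)
    fix y assume "t < y"
    then show "(1 / norm(y - t)) *\<^sub>R (f y - (f t + (y - t) *\<^sub>R f')) + f' = (1/(y-t)) *\<^sub>R (f y - f t)"
    proof -
      have n: "norm (y - t) = y - t" using \<open>t<y\<close> by simp
      have "(1 / (y - t)) *\<^sub>R ((y - t) *\<^sub>R f') = f'" using \<open>t<y\<close> by simp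
      then show ?thesis unfolding n by (simp add: scaleR_diff_right scaleR_add_right)
    qed
  qed auto
  ultimately have "((\<lambda>y. (1/(y-t)) *\<^sub>R (f y - f t)) \<longlongrightarrow> f') (at_right t)"
    using tendsto_cong by fastforce
  then show ?thesis
    unfolding filterlim_at_right_to_0[of _ _ t] by (simp add: add.commute)
qed

lemma cont_lim:
  fixes f :: "real \<Rightarrow> 'b::real_normed_vector"
  assumes d: "(f has_vector_derivative f') (at t within {0..})" and t: "t \<ge> 0"
  shows "((\<lambda>h. f (t+h)) \<longlongrightarrow> f t) (at_right 0)"
proof -
  have "continuous (at t within {0..}) f" using has_vector_derivative_continuous[OF d] .
  hence "(f \<longlongrightarrow> f t) (at t within {0..})" by (simp add: continuous_within)
  hence "(f \<longlongrightarrow> f t) (at_right t)" by (rule tendsto_within_subset) (use t in auto)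
  then show ?thesis unfolding filterlim_at_right_to_0[of _ _ t] by (simp add: add.commute)
qed

lemma dini_from_lim:
  fixes f B :: "real \<Rightarrow> real"
  assumes "(B \<longlongrightarrow> D) (at_right 0)" "D \<le> 0"
    "eventually (\<lambda>h. f(t+h) - f t \<le> h * B h) (at_right 0)" "\<epsilon> > 0"
  shows "\<exists>d>0. \<forall>h. 0<h \<and> h<d \<longrightarrow> f(t+h) \<le> f t + \<epsilon>*h"
proof -
  have "eventually (\<lambda>h. B h < \<epsilon>) (at_right 0)"
    using order_tendstoD(2)[OF assms(1)] assms by auto
  with assms(3) have "eventually (\<lambda>h. f(t+h) - f t \<le> h * B h \<and> B h < \<epsilon>) (at_right 0)"
    by (auto elim: eventually_elim2)
  then obtain d where d: "d > 0" "\<And>h. h > 0 \<Longrightarrow> h < d \<Longrightarrow> f(t+h) - f t \<le> h * B h \<and> B h < \<epsilon>"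
    unfolding eventually_at_right_field by auto
  show ?thesis
  proof (intro exI[of _ d] conjI allI impI)
    fix h assume h: "0 < h \<and> h < d"
    with d(2) have "f(t+h) - f t \<le> h * B h" "B h < \<epsilon>" by auto
    moreover have "h * B h \<le> h * \<epsilon>" using h \<open>B h < \<epsilon>\<close> by (intro mult_left_mono) auto
    ultimately show "f(t+h) \<le> f t + \<epsilon>*h" by (simp add: mult.commute)
  qed (use d in auto)
qed

lemma dini_mono:
  fixes f :: "real \<Rightarrow> real"
  assumes cont: "continuous_on {0..} f"
    and dini: "\<And>t \<epsilon>. t \<ge> 0 \<Longrightarrow> \<epsilon> > 0 \<Longrightarrow> \<exists>d>0. \<forall>h. 0 < h \<and> h < d \<longrightarrow> f (t+h) \<le> f t + \<epsilon> * h"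
    and s: "0 \<le> s" "s \<le> t"
  shows "f t \<le> f s"
proof (rule field_le_epsilon)
  fix e :: real assume e0: "0 < e"
  define e' where "e' = e / (t - s + 1)"
  have e'0: "e' > 0" using e0 s by (simp add: e'_def)
  define S where "S = {u \<in> {s..t}. f u \<le> f s + e' * (u - s)}"
  have cS: "closed S" unfolding S_def
    by (rule continuous_on_closed_Collect_le)
       (use s in \<open>auto intro!: continuous_intros continuous_on_subset[OF cont]\<close>)
  have sS: "s \<in> S" unfolding S_def using s by auto
  have bS: "bdd_above S" unfolding S_def by (auto intro: bdd_aboveI[of _ t])
  define c where "c = Sup S"
  have cin: "c \<in> S" unfolding c_def using closed_contains_Sup[OF _ bS cS] sS by blast
  have ct: "c = t"
  proof (rule ccontr)
    assume "c \<noteq> t"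
    with cin have ct: "c < t" "s \<le> c" unfolding S_def by auto
    obtain d where d: "d > 0" "\<forall>h. 0 < h \<and> h < d \<longrightarrow> f (c+h) \<le> f c + e' * h"
      using dini[of c e'] ct s e'0 by auto
    define h where "h = min (d/2) (t - c)"
    have h: "0 < h" "h < d" "c + h \<le> t" using d ct by (auto simp: h_def)
    have "f (c+h) \<le> f c + e' * h" using d h by auto
    also have "\<dots> \<le> f s + e' * (c + h - s)" using cin unfolding S_def by (auto simp: algebra_simps)
    finally have "c + h \<in> S" unfolding S_def using h ct by auto
    hence "c + h \<le> c" unfolding c_def by (rule cSup_upper[OF _ bS])
    with h show False by auto
  qed
  have "f t \<le> f s + e' * (t - s)" using cin ct unfolding S_def by auto
  also have "e' * (t - s) \<le> e"
    using e0 s by (simp add: e'_def field_simps)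
  finally show "f t \<le> f s + e" by simp
qed

lemma final_bound:
  fixes b a p p0 t :: real
  assumes b: "b > 0" and a: "a > 0" and t: "t \<ge> 0" and p0: "p0 \<ge> 0" and ne: "b \<noteq> 2*a"
    and h: "exp(b*t)*p - b*p0*(exp((b-2*a)*t) - 1)/(b-2*a) \<le> p0"
  shows "p \<le> p0 * (1 + b/\<bar>b-2*a\<bar>) * exp(-min b (2*a) * t)"
proof -
  define E1 where "E1 = exp(-b*t)"
  define E2 where "E2 = exp(-(2*a)*t)"
  define M where "M = exp(-min b (2*a) * t)"
  define c where "c = b*p0/(b-2*a)"
  have E1p: "E1 > 0" and E2p: "E2 > 0" by (auto simp: E1_def E2_def)
  have e1: "exp(b*t) * E1 = 1" by (simp add: E1_def flip: exp_add)
  have e2: "exp((b-2*a)*t) * E1 = E2" by (simp add: E1_def E2_def algebra_simps flip: exp_add)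
  have h': "exp(b*t)*p - c*(exp((b-2*a)*t) - 1) \<le> p0" using h by (simp add: c_def)
  have "(exp(b*t)*p - c*(exp((b-2*a)*t) - 1)) * E1 \<le> p0 * E1"
    using mult_right_mono[OF h'] E1p by auto
  moreover have "(exp(b*t)*p - c*(exp((b-2*a)*t) - 1)) * E1
     = p*(exp(b*t)*E1) - c*(exp((b-2*a)*t)*E1) + c*E1" by (simp add: algebra_simps)
  ultimately have m: "p - c*(E2 - E1) \<le> p0 * E1"
    unfolding e1 e2 by (simp add: algebra_simps)
  have E1M: "E1 \<le> M" unfolding E1_def M_def using t by (auto intro: mult_right_mono)
  have E2M: "E2 \<le> M" unfolding E2_def M_def using t by (auto intro: mult_right_mono)
  have d: "\<bar>E2 - E1\<bar> \<le> M" using E1M E2M E1p E2p by auto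
  have "c*(E2 - E1) = b*p0 * ((E2 - E1)/(b-2*a))" by (simp add: c_def)
  also have "(E2 - E1)/(b-2*a) \<le> M/\<bar>b-2*a\<bar>"
  proof -
    have "(E2 - E1)/(b-2*a) \<le> \<bar>(E2 - E1)/(b-2*a)\<bar>" by (rule abs_ge_self)
    also have "\<dots> = \<bar>E2 - E1\<bar>/\<bar>b-2*a\<bar>" by (simp add: abs_divide)
    also have "\<dots> \<le> M/\<bar>b-2*a\<bar>" using d ne by (intro divide_right_mono) auto
    finally show ?thesis .
  qed
  hence "b*p0 * ((E2 - E1)/(b-2*a)) \<le> b*p0 * (M/\<bar>b-2*a\<bar>)"
    using b p0 by (intro mult_left_mono) auto
  finally have "c*(E2 - E1) \<le> b*p0 * (M/\<bar>b-2*a\<bar>)" .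
  moreover have "p0 * E1 \<le> p0 * M" using E1M p0 by (intro mult_left_mono)
  ultimately have "p \<le> p0 * M + b*p0 * (M/\<bar>b-2*a\<bar>)" using m by linarith
  also have "\<dots> = p0 * (1 + b/\<bar>b-2*a\<bar>) * M" by (simp add: algebra_simps)
  finally show ?thesis unfolding M_def .
qed

theorem theorem6p1:
  fixes F :: "'a::{real_inner, complete_space} \<Rightarrow> real"
    and gradF :: "'a \<Rightarrow> 'a"
    and L \<mu> \<delta> \<alpha> :: real
    and x0 :: 'a
    and x :: "real \<Rightarrow> 'a"
  assumes diff: "\<And>y. (F has_derivative (\<lambda>h. gradF y \<bullet> h)) (at y)"
    and lip: "\<And>y z. norm (gradF y - gradF z) \<le> L * norm (y - z)"
    and argmin: "\<exists>z. \<forall>y. F z \<le> F y"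
    and mu_pos: "\<mu> > 0"
    and PL: "\<And>y. F y - Fstar F \<le> (1 / (2 * \<mu>)) * (norm (gradF y))\<^sup>2"
    and mu_le_L: "\<mu> \<le> L"
    and delta_pos: "\<delta> > 0"
    and alpha_range:
      "(L / \<delta> < \<alpha> \<and> \<alpha> \<le> (\<delta> + 3 * L / \<delta> - sqrt ((\<delta> + L / \<delta>)\<^sup>2 - 4 * \<mu>)) / 2)
       \<or> ((\<delta> + 3 * L / \<delta> + sqrt ((\<delta> + L / \<delta>)\<^sup>2 - 4 * \<mu>)) / 2 \<le> \<alpha> \<and> \<alpha> < \<delta> + 2 * L / \<delta>)"
    and alpha_ne: "\<alpha> \<noteq> (\<delta> + 4 * L / \<delta>) / 3"
    and sol: "heavy_ball_solution gradF \<alpha> x0 x"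
  shows "\<forall>t\<ge>0. F (x t) - Fstar F \<le>
           (F x0 - Fstar F)
           * (1 + (\<delta> + 2 * L / \<delta> - \<alpha>) / \<bar>\<delta> + 4 * L / \<delta> - 3 * \<alpha>\<bar>)
           * exp (- min (\<delta> + 2 * L / \<delta> - \<alpha>) (2 * (\<alpha> - L / \<delta>)) * t)"
proof -
  obtain v acc where x00: "x 0 = x0" and v00: "v 0 = 0"
    and dx: "\<And>t. t \<ge> 0 \<Longrightarrow> (x has_vector_derivative v t) (at t within {0..})"
    and dv: "\<And>t. t \<ge> 0 \<Longrightarrow> (v has_vector_derivative acc t) (at t within {0..})"
    and ode: "\<And>t. t \<ge> 0 \<Longrightarrow> acc t + \<alpha> *\<^sub>R v t + gradF (x t) = 0"
    using sol unfolding heavy_ball_solution_def by blast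
  define l where "l = L / \<delta>"
  define a where "a = \<alpha> - l"
  define b where "b = \<delta> + 2*l - \<alpha>"
  have L0: "L > 0" using mu_pos mu_le_L by linarith
  have l0: "l > 0" using L0 delta_pos by (simp add: l_def)
  have Ll: "L = l * \<delta>" using delta_pos by (simp add: l_def)
  obtain z where z: "\<And>y. F z \<le> F y" using argmin by blast
  have Fs: "Fstar F = F z" unfolding Fstar_def by (rule cInf_eq_minimum) (auto intro: z)
  have phinn: "\<And>y. F y - Fstar F \<ge> 0" using z Fs by auto
  define Dd where "Dd = (\<delta> + l)\<^sup>2 - 4 * \<mu>"
  have Dd0: "Dd \<ge> 0"
  proof -
    have "(\<delta> + l)\<^sup>2 - 4 * L = (\<delta> - l)\<^sup>2" using Ll by (simp add: power2_eq_square algebra_simps)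
    thus ?thesis using mu_le_L unfolding Dd_def by (smt (verit) zero_le_power2)
  qed
  define s where "s = sqrt Dd"
  have s0: "s \<ge> 0" and ss: "s * s = Dd" using Dd0 by (auto simp: s_def)
  have ar: "(l < \<alpha> \<and> \<alpha> \<le> (\<delta> + 3 * l - s) / 2) \<or> ((\<delta> + 3 * l + s) / 2 \<le> \<alpha> \<and> \<alpha> < \<delta> + 2 * l)"
    using alpha_range unfolding s_def Dd_def l_def by (simp add: times_divide_eq_right)
  have sq: "s * s \<le> (\<delta> + 3*l - 2*\<alpha>) * (\<delta> + 3*l - 2*\<alpha>)"
  proof (cases "\<alpha> \<le> (\<delta> + 3 * l - s) / 2")
    case True
    then show ?thesis using s0 by (intro mult_mono) auto
  next
    case False
    with ar have "(\<delta> + 3 * l + s) / 2 \<le> \<alpha>" by auto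
    hence "s * s \<le> (2*\<alpha> - (\<delta> + 3*l)) * (2*\<alpha> - (\<delta> + 3*l))" using s0 by (intro mult_mono) auto
    thus ?thesis by (simp add: algebra_simps)
  qed
  have abmu: "a * b \<le> \<mu>"
    using sq unfolding ss Dd_def a_def b_def by (simp add: power2_eq_square algebra_simps)
  have a0: "a > 0" using ar s0 l0 delta_pos unfolding a_def by auto
  have b0: "b > 0" using ar s0 l0 delta_pos unfolding b_def by auto
  have bne: "b \<noteq> 2*a" using alpha_ne unfolding a_def b_def l_def by (auto simp: field_simps)
  have gc: "continuous_on UNIV gradF"
  proof (rule lipschitz_on_continuous_on)
    show "L-lipschitz_on UNIV gradF"
      by (rule lipschitz_onI) (use lip L0 in \<open>auto simp: dist_norm\<close>)
  qed
  have cx: "continuous_on {0..} x" by (rule continuous_on_vector_derivative) (use dx in auto)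
  have cv: "continuous_on {0..} v" by (rule continuous_on_vector_derivative) (use dv in auto)
  have cg: "continuous_on {0..} (\<lambda>s. gradF (x s))"
    by (rule continuous_on_compose2[OF gc cx]) auto
  have dphi: "((\<lambda>s. F (x s)) has_real_derivative (gradF (x t) \<bullet> v t)) (at t within {0..})"
    if t: "t \<ge> 0" for t
  proof -
    have "(F has_derivative (\<lambda>h. gradF (x t) \<bullet> h)) (at (x t) within x ` {0..})"
      by (rule has_derivative_subset[OF diff]) auto
    from diff_chain_within[OF dx[OF t, unfolded has_vector_derivative_def] this]
    have "((F \<circ> x) has_derivative ((\<lambda>h. gradF (x t) \<bullet> h) \<circ> (\<lambda>h. h *\<^sub>R v t))) (at t within {0..})" .
    moreover have "((\<lambda>h. gradF (x t) \<bullet> h) \<circ> (\<lambda>h. h *\<^sub>R v t)) = (*) (gradF (x t) \<bullet> v t)"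
      by (auto simp: fun_eq_iff)
    ultimately show ?thesis unfolding has_field_derivative_def o_def by simp
  qed
  have cphi: "continuous_on {0..} (\<lambda>s. F (x s))"
    by (rule continuous_on_vector_derivative) (use dphi in \<open>auto simp: has_real_derivative_iff_has_vector_derivative\<close>)
  have accE: "acc t = - (\<alpha> *\<^sub>R v t + gradF (x t))" if "t \<ge> 0" for t
    using ode[OF that] by (metis add.assoc eq_neg_iff_add_eq_0)
  define V where "V t = b * (F (x t) - Fstar F) + gradF (x t) \<bullet> v t + \<delta>/2 * (v t \<bullet> v t)" for t
  define f where "f t = exp (2*a*t) * V t" for t
  have cf: "continuous_on {0..} f"
    unfolding f_def V_def by (intro continuous_intros cx cv cg cphi)
  have fdini: "\<exists>d>0. \<forall>h. 0 < h \<and> h < d \<longrightarrow> f (t+h) \<le> f t + \<epsilon> * h"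
    if t: "t \<ge> 0" and e: "\<epsilon> > 0" for t \<epsilon>
  proof -
    define G where "G = gradF (x t)"
    define rho where "rho s = exp(2*a * s) * (b * (F (x s) - Fstar F) + G \<bullet> v s + \<delta>/2 * (v s \<bullet> v s))" for s
    define rhoD where "rhoD = exp(2*a*t) * (2*a) * (b * (F (x t) - Fstar F) + G \<bullet> v t + \<delta>/2 * (v t \<bullet> v t))
       + exp(2*a*t) * (b * (G \<bullet> v t) + G \<bullet> acc t + \<delta>/2 * (v t \<bullet> acc t + acc t \<bullet> v t))"
    have d1: "((\<lambda>s. G \<bullet> v s) has_real_derivative (G \<bullet> acc t)) (at t within {0..})"
      unfolding has_real_derivative_iff_has_vector_derivative
      by (rule bounded_linear.has_vector_derivative[OF bounded_linear_inner_right dv[OF t]])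
    have d2: "((\<lambda>s. v s \<bullet> v s) has_real_derivative (v t \<bullet> acc t + acc t \<bullet> v t)) (at t within {0..})"
      unfolding has_real_derivative_iff_has_vector_derivative
      by (rule bounded_bilinear.has_vector_derivative[OF bounded_bilinear_inner dv[OF t] dv[OF t]])
    have d3: "((\<lambda>s. F (x s) - Fstar F) has_real_derivative (G \<bullet> v t)) (at t within {0..})"
      using dphi[OF t] unfolding G_def by (auto intro!: derivative_eq_intros)
    have drho: "(rho has_real_derivative rhoD) (at t within {0..})"
      unfolding rho_def rhoD_def
      by (rule derivative_eq_intros d1 d2 d3 refl | simp)+
    define B where "B h = (rho (t+h) - rho t)/h
        + exp(2*a*(t+h)) * L * (norm ((1/h) *\<^sub>R (x (t+h) - x t)) * norm (v (t+h)))" for h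
    define D where "D = rhoD + exp(2*a*t) * L * (norm (v t) * norm (v t))"
    have q1: "((\<lambda>h. (rho (t+h) - rho t)/h) \<longlongrightarrow> rhoD) (at_right 0)"
      using quot_lim[OF drho[unfolded has_real_derivative_iff_has_vector_derivative] t]
      by (simp add: divide_inverse mult.commute)
    have q2: "((\<lambda>h. (1/h) *\<^sub>R (x (t+h) - x t)) \<longlongrightarrow> v t) (at_right 0)"
      by (rule quot_lim[OF dx[OF t] t])
    have q3: "((\<lambda>h. v (t+h)) \<longlongrightarrow> v t) (at_right 0)"
      by (rule cont_lim[OF dv[OF t] t])
    have q4: "((\<lambda>h. exp(2*a*(t+h))) \<longlongrightarrow> exp(2*a*t)) (at_right 0)"
      by (auto intro!: tendsto_eq_intros)
    have BD: "(B \<longlongrightarrow> D) (at_right 0)"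
      unfolding B_def D_def by (intro tendsto_intros q1 q2 q3 q4)
    have D0: "D \<le> 0"
    proof -
      define p where "p = G \<bullet> v t"
      define q where "q = v t \<bullet> v t"
      define r where "r = G \<bullet> G"
      define ph where "ph = F (x t) - Fstar F"
      have acc1: "G \<bullet> acc t = - \<alpha> * p - r" unfolding accE[OF t] p_def r_def G_def
        by (simp add: inner_add_right inner_diff_right)
      have acc2: "v t \<bullet> acc t = - \<alpha> * q - p" unfolding accE[OF t] p_def q_def G_def
        by (simp add: inner_add_right inner_diff_right inner_commute)
      have acc3: "acc t \<bullet> v t = - \<alpha> * q - p" using acc2 by (simp add: inner_commute)
      have nq: "norm (v t) * norm (v t) = q" unfolding q_def
        by (simp add: power2_norm_eq_inner[symmetric] power2_eq_square)
      have "D = exp(2*a*t) * (2*a*b*ph - r)"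
        unfolding D_def rhoD_def acc1 acc2 acc3 nq
        unfolding ph_def[symmetric] p_def[symmetric] q_def[symmetric]
        unfolding a_def b_def Ll by (simp add: algebra_simps)
      moreover have "2*a*b*ph \<le> r"
      proof -
        have "ph \<le> (1 / (2 * \<mu>)) * r" using PL[of "x t"]
          unfolding ph_def r_def G_def by (simp add: power2_norm_eq_inner)
        hence "2*\<mu>*ph \<le> r" using mu_pos by (simp add: field_simps)
        moreover have "a*b*ph \<le> \<mu>*ph" using abmu phinn[of "x t"] unfolding ph_def
          by (intro mult_right_mono) auto
        ultimately show ?thesis by linarith
      qed
      ultimately show ?thesis by (simp add: mult_nonneg_nonpos)
    qed
    have ev: "eventually (\<lambda>h. f (t+h) - f t \<le> h * B h) (at_right 0)"
      unfolding eventually_at_right_field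
    proof (intro exI[of _ 1] conjI allI impI)
      fix h :: real assume "0 < h" "h < 1"
      hence h: "0 < h \<and> h < 1" by auto
      have th: "t + h \<ge> 0" using t h by auto
      have ft: "f t = rho t" unfolding f_def V_def rho_def G_def ..
      have fth: "f (t+h) = rho (t+h) + exp(2*a*(t+h)) * ((gradF (x (t+h)) - G) \<bullet> v (t+h))"
        unfolding f_def V_def rho_def by (simp add: algebra_simps inner_diff_left)
      have "(gradF (x (t+h)) - G) \<bullet> v (t+h) \<le> norm (gradF (x (t+h)) - G) * norm (v (t+h))"
        by (rule norm_cauchy_schwarz)
      also have "\<dots> \<le> L * norm (x (t+h) - x t) * norm (v (t+h))"
        unfolding G_def by (intro mult_right_mono lip) auto
      also have "norm (x (t+h) - x t) = h * norm ((1/h) *\<^sub>R (x (t+h) - x t))"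
        using h by simp
      finally have "exp(2*a*(t+h)) * ((gradF (x (t+h)) - G) \<bullet> v (t+h))
          \<le> exp(2*a*(t+h)) * (L * (h * norm ((1/h) *\<^sub>R (x (t+h) - x t))) * norm (v (t+h)))"
        by (intro mult_left_mono) auto
      moreover have "h * B h = rho (t+h) - rho t + exp(2*a*(t+h)) * (L * (h * norm ((1/h) *\<^sub>R (x (t+h) - x t))) * norm (v (t+h)))"
      proof -
        have "h * ((rho (t+h) - rho t)/h) = rho (t+h) - rho t" using h by simp
        thus ?thesis unfolding B_def by (simp add: distrib_left algebra_simps)
      qed
      ultimately show "f (t+h) - f t \<le> h * B h" unfolding ft fth by linarith
    qed auto
    show ?thesis by (rule dini_from_lim[OF BD D0 ev e])
  qed
  have fmono: "f t \<le> b * (F x0 - Fstar F)" if "t \<ge> 0" for t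
  proof -
    have "f t \<le> f 0" by (rule dini_mono[OF cf fdini]) (use that in auto)
    also have "f 0 = b * (F x0 - Fstar F)" unfolding f_def V_def by (simp add: x00 v00)
    finally show ?thesis .
  qed
  define p0 where "p0 = F x0 - Fstar F"
  define cc where "cc = b*p0/(b-2*a)"
  have cc: "cc * (b-2*a) = b*p0" unfolding cc_def using bne by simp
  define psi where "psi u = exp(b * u) * (F (x u) - Fstar F) - cc*(exp((b-2*a) * u) - 1)" for u
  define psiD where "psiD u = exp(b * u) * b * (F (x u) - Fstar F) + exp(b * u) * (gradF (x u) \<bullet> v u)
      - cc*(exp((b-2*a) * u) * (b-2*a))" for u
  have dpsi: "(psi has_real_derivative psiD u) (at u within {0..})" if u: "u \<ge> 0" for u
  proof -
    have d3: "((\<lambda>s. F (x s) - Fstar F) has_real_derivative (gradF (x u) \<bullet> v u)) (at u within {0..})"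
      using dphi[OF u] by (auto intro!: derivative_eq_intros)
    show ?thesis unfolding psi_def psiD_def
      by (rule d3 derivative_eq_intros refl | simp)+
  qed
  have psiD0: "psiD u \<le> 0" if u: "u \<ge> 0" for u
  proof -
    have "b * (F (x u) - Fstar F) + gradF (x u) \<bullet> v u \<le> V u"
      unfolding V_def using delta_pos by simp
    hence "exp(b * u) * (b * (F (x u) - Fstar F) + gradF (x u) \<bullet> v u) \<le> exp(b * u) * V u"
      by (intro mult_left_mono) auto
    also have "exp(b * u) * V u = exp((b-2*a) * u) * f u"
      unfolding f_def by (simp add: algebra_simps flip: exp_add)
    also have "\<dots> \<le> exp((b-2*a) * u) * (b*p0)"
      using fmono[OF u] unfolding p0_def by (intro mult_left_mono) auto
    finally have A: "exp(b * u) * (b * (F (x u) - Fstar F) + gradF (x u) \<bullet> v u) \<le> exp((b-2*a) * u) * (b*p0)" .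
    moreover have "psiD u = exp(b * u) * (b * (F (x u) - Fstar F) + gradF (x u) \<bullet> v u) - cc*(exp((b-2*a) * u) * (b-2*a))"
      unfolding psiD_def by (simp add: algebra_simps)
    moreover have "cc*(exp((b-2*a) * u) * (b-2*a)) = exp((b-2*a) * u) * (b*p0)"
      using cc by (metis mult.assoc mult.commute)
    ultimately show ?thesis by linarith
  qed
  have cpsi: "continuous_on {0..} psi"
    by (rule continuous_on_vector_derivative)
       (use dpsi in \<open>auto simp: has_real_derivative_iff_has_vector_derivative\<close>)
  have psidini: "\<exists>d>0. \<forall>h. 0 < h \<and> h < d \<longrightarrow> psi (t+h) \<le> psi t + \<epsilon> * h"
    if t: "t \<ge> 0" and e: "\<epsilon> > 0" for t \<epsilon>
  proof (rule dini_from_lim[OF _ psiD0[OF t] _ e])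
    show "((\<lambda>h. (psi (t+h) - psi t)/h) \<longlongrightarrow> psiD t) (at_right 0)"
      using quot_lim[OF dpsi[OF t, unfolded has_real_derivative_iff_has_vector_derivative] t]
      by (simp add: divide_inverse mult.commute)
    show "eventually (\<lambda>h. psi (t+h) - psi t \<le> h * ((psi (t+h) - psi t)/h)) (at_right 0)"
      unfolding eventually_at_right_field by (intro exI[of _ 1]) auto
  qed
  show ?thesis
  proof (intro allI impI)
    fix t :: real assume t: "t \<ge> 0"
    have "psi t \<le> psi 0" by (rule dini_mono[OF cpsi psidini]) (use t in auto)
    also have "psi 0 = p0" unfolding psi_def p0_def by (simp add: x00)
    finally have h: "exp(b*t)*(F (x t) - Fstar F) - b*p0*(exp((b-2*a)*t) - 1)/(b-2*a) \<le> p0"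
      unfolding psi_def cc_def by simp
    have p00: "p0 \<ge> 0" unfolding p0_def using phinn by auto
    have fb: "F (x t) - Fstar F \<le> p0 * (1 + b/\<bar>b-2*a\<bar>) * exp(-min b (2*a) * t)"
      by (rule final_bound[OF b0 a0 t p00 bne h])
    have e1: "\<delta> + 2 * L / \<delta> - \<alpha> = b" unfolding b_def l_def by simp
    have e2: "2 * (\<alpha> - L / \<delta>) = 2*a" unfolding a_def l_def by simp
    have e3: "\<delta> + 4 * L / \<delta> - 3 * \<alpha> = b - 2*a" unfolding a_def b_def l_def by simp
    show "F (x t) - Fstar F \<le> (F x0 - Fstar F)
           * (1 + (\<delta> + 2 * L / \<delta> - \<alpha>) / \<bar>\<delta> + 4 * L / \<delta> - 3 * \<alpha>\<bar>)
           * exp (- min (\<delta> + 2 * L / \<delta> - \<alpha>) (2 * (\<alpha> - L / \<delta>)) * t)"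
      unfolding e1 e2 e3 using fb unfolding p0_def .
  qed
qed

end
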